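(* Let $f\in L^2(\mathbb{R},\Phi)$ be a convex function that is not identically zero. Then $f$ has Hermite rank at most $2$, i.e. at least one of $\int f h_0\,d\Phi$, $\int f h_1\,d\Phi$, $\int f h_2\,d\Phi$ is nonzero.
   Context: $\Phi$ denotes the standard normal distribution on $\mathbb{R}$ and $L^2(\mathbb{R},\Phi)=\{f:\int f^2\,d\Phi<\infty\}$. The Hermite polynomials are $h_m(x)=(-1)^m e^{x^2/2}\frac{d^m}{dx^m}e^{-x^2/2}$, $m=0,1,2,\dots$ (so $h_0=1$, $h_1(x)=x$, $h_2(x)=x^2-1$); they form an orthogonal basis of $L^2(\mathbb{R},\Phi)$, so every $f\in L^2(\mathbb{R},\Phi)$ has a unique expansion $f=\sum_{i\ge0}c_ih_i$. The Hermite rank of a nonzero $f$ is the smallest index $i$ with $c_i\neq 0$, equivalently with $\int f h_i\,d\Phi\ne 0$. *)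

theory Defs
  imports "HOL-Probability.Probability"
begin

definition std_gauss :: "real measure" where
  "std_gauss = density lborel std_normal_density"

definition hermite :: "nat \<Rightarrow> real \<Rightarrow> real" where
  "hermite m x = (-1) ^ m * exp (x\<^sup>2 / 2) * ((deriv ^^ m) (\<lambda>t. exp (- t\<^sup>2 / 2)) x)"

definition L2_gauss :: "(real \<Rightarrow> real) \<Rightarrow> bool" where
  "L2_gauss f \<longleftrightarrow> f \<in> borel_measurable borel \<and> integrable std_gauss (\<lambda>x. (f x)\<^sup>2)"

end

theory Submission
  imports Defs "HOL-Real_Asymp.Real_Asymp"
begin


abbreviation "phi \<equiv> std_normal_density"

lemma d1: "deriv (\<lambda>t::real. exp (- t\<^sup>2 / 2)) = (\<lambda>t. - t * exp (- t\<^sup>2 / 2))"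
proof
  fix t :: real
  show "deriv (\<lambda>t::real. exp (- t\<^sup>2 / 2)) t = - t * exp (- t\<^sup>2 / 2)"
    by (rule DERIV_imp_deriv) (auto intro!: derivative_eq_intros)
qed

lemma d2: "deriv (\<lambda>t::real. - t * exp (- t\<^sup>2 / 2)) = (\<lambda>t. (t\<^sup>2 - 1) * exp (- t\<^sup>2 / 2))"
proof
  fix t :: real
  show "deriv (\<lambda>t::real. - t * exp (- t\<^sup>2 / 2)) t = (t\<^sup>2 - 1) * exp (- t\<^sup>2 / 2)"
    by (rule DERIV_imp_deriv) (auto intro!: derivative_eq_intros simp: algebra_simps power2_eq_square)
qed

lemma expcancel: "exp (x\<^sup>2 / 2) * exp (- x\<^sup>2 / 2) = (1::real)"
  by (metis exp_minus_inverse minus_divide_left)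

lemma herm0: "hermite 0 x = 1"
  by (simp add: hermite_def) (metis exp_minus_inverse)
lemma herm1: "hermite 1 x = x"
proof -
  have "(deriv ^^ 1) (\<lambda>t::real. exp (- t\<^sup>2 / 2)) = (\<lambda>t. - t * exp (- t\<^sup>2 / 2))"
    using d1 by simp
  then show ?thesis using expcancel[of x] unfolding hermite_def by simp
qed
lemma herm2: "hermite 2 x = x\<^sup>2 - 1"
proof -
  have "(deriv ^^ 2) (\<lambda>t::real. exp (- t\<^sup>2 / 2)) = (\<lambda>t. (t\<^sup>2 - 1) * exp (- t\<^sup>2 / 2))"
    using d1 d2 by (simp add: numeral_2_eq_2)
  then show ?thesis using expcancel[of x] unfolding hermite_def
    by (simp add: algebra_simps)
qed



lemma int_poly3: "integrable lborel (\<lambda>x. (c0 + c1*x + c2*x\<^sup>2 + c3*x^3) * phi x)"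
proof -
  have i: "\<And>k c. integrable lborel (\<lambda>x. c * (phi x * x^k))"
    by (intro integrable_mult_right integrable_std_normal_moment)
  have "integrable lborel (\<lambda>x. c0 * (phi x * x^0) + c1 * (phi x * x^1) + c2 * (phi x * x^2) + c3 * (phi x * x^3))"
    by (intro Bochner_Integration.integrable_add i)
  then show ?thesis by (simp add: algebra_simps)
qed

lemma phi_der: "(phi has_real_derivative (- x * phi x)) (at x)"
proof -
  have eq: "phi = (\<lambda>x. (1/sqrt(2*pi)) * exp(-x\<^sup>2/2))" by (rule ext) (simp add: std_normal_density_def)
  have "((\<lambda>x. (1/sqrt(2*pi)) * exp(-x\<^sup>2/2)) has_real_derivative (1/sqrt(2*pi)) * (exp(-x\<^sup>2/2) * (-x))) (at x)"
    by (intro DERIV_cmult) (auto intro!: derivative_eq_intros)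
  then show ?thesis unfolding eq by (simp add: mult_ac)
qed

lemma P_int: "integrable lborel (\<lambda>x. indicator {s..} x * ((x - s) * (x\<^sup>2 - 1) * phi x))"
proof -
  have "integrable lborel (\<lambda>x. (s + (-1)*x + (-s)*x\<^sup>2 + 1*x^3) * phi x)" by (rule int_poly3)
  also have "(\<lambda>x. (s + (-1)*x + (-s)*x\<^sup>2 + 1*x^3) * phi x) = (\<lambda>x. (x - s) * (x\<^sup>2 - 1) * phi x)"
    by (auto simp: algebra_simps power2_eq_square power3_eq_cube)
  finally have "integrable lborel (\<lambda>x. (x - s) * (x\<^sup>2 - 1) * phi x)" .
  from integrable_mult_indicator[OF _ this, of "{s..}"] show ?thesis by simp
qed

lemma P_val: "(\<integral>x. indicator {s..} x * ((x - s) * (x\<^sup>2 - 1) * phi x) \<partial>lborel) = phi s"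
proof -
  define g where "g x = (x - s) * (x\<^sup>2 - 1) * phi x" for x
  define F where "F x = - (x\<^sup>2 - s * x + 1) * phi x" for x
  have der: "(F has_real_derivative g x) (at x)" for x
    unfolding F_def g_def
    by (auto intro!: derivative_eq_intros phi_der simp: algebra_simps power2_eq_square power3_eq_cube)
  have lim: "(F \<longlongrightarrow> 0) at_top"
    unfolding F_def std_normal_density_def by real_asymp
  have "((\<lambda>y. \<integral>x. indicator {..y} x *\<^sub>R (indicator {s..} x * g x) \<partial>lborel) \<longlongrightarrow>
     (\<integral>x. indicator {s..} x * g x \<partial>lborel)) at_top"
    by (rule tendsto_integral_at_top) (auto simp: g_def P_int)
  moreover have "\<forall>\<^sub>F y in at_top. (\<integral>x. indicator {..y} x *\<^sub>R (indicator {s..} x * g x) \<partial>lborel) = F y - F s"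
  proof (rule eventually_at_top_linorder[THEN iffD2], intro exI allI impI)
    fix y assume "s \<le> y"
    have "(\<integral>x. indicator {..y} x *\<^sub>R (indicator {s..} x * g x) \<partial>lborel) = (\<integral>x. indicator {s..y} x *\<^sub>R g x \<partial>lborel)"
      by (intro Bochner_Integration.integral_cong) (auto split: split_indicator)
    also have "\<dots> = F y - F s"
      using \<open>s \<le> y\<close>
    proof (intro integral_FTC_atLeastAtMost)
      show "(F has_vector_derivative g x) (at x within {s..y})" for x
        by (metis der has_real_derivative_iff_has_vector_derivative has_vector_derivative_at_within)
      show "continuous_on {s..y} g"
        unfolding g_def std_normal_density_def by (intro continuous_intros) auto
    qed
    finally show "(\<integral>x. indicator {..y} x *\<^sub>R (indicator {s..} x * g x) \<partial>lborel) = F y - F s" .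
  qed
  ultimately have "((\<lambda>y. F y - F s) \<longlongrightarrow> (\<integral>x. indicator {s..} x * g x \<partial>lborel)) at_top"
    by (rule Lim_transform_eventually)
  moreover have "((\<lambda>y. F y - F s) \<longlongrightarrow> 0 - F s) at_top"
    by (intro tendsto_intros lim)
  ultimately have "(\<integral>x. indicator {s..} x * g x \<partial>lborel) = 0 - F s"
    by (rule tendsto_unique[OF trivial_limit_at_top_linorder])
  then show ?thesis by (simp add: g_def F_def power2_eq_square)
qed


lemma phi_neg: "phi (- x) = phi x"
  by (simp add: std_normal_density_def)

lemma N_int: "integrable lborel (\<lambda>x. indicator {..s} x * ((s - x) * (x\<^sup>2 - 1) * phi x))"
proof -
  have "integrable lborel (\<lambda>x. indicator {-s..} x * ((x - (-s)) * (x\<^sup>2 - 1) * phi x))" by (rule P_int)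
  then have "integrable lborel (\<lambda>x. indicator {-s..} (0 + (-1) * x) * (((0 + (-1) * x) - (-s)) * ((0 + (-1) * x)\<^sup>2 - 1) * phi (0 + (-1) * x)))"
    by (rule lborel_integrable_real_affine) simp
  also have "(\<lambda>x. indicator {-s..} (0 + (-1) * x) * (((0 + (-1) * x) - (-s)) * ((0 + (-1) * x)\<^sup>2 - 1) * phi (0 + (-1) * x)))
     = (\<lambda>x. indicator {..s} x * ((s - x) * (x\<^sup>2 - 1) * phi x))"
    by (auto simp: phi_neg split: split_indicator)
  finally show ?thesis .
qed

lemma N_val: "(\<integral>x. indicator {..s} x * ((s - x) * (x\<^sup>2 - 1) * phi x) \<partial>lborel) = phi s"
proof -
  have "(\<integral>x. indicator {..s} x * ((s - x) * (x\<^sup>2 - 1) * phi x) \<partial>lborel)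
     = \<bar>-1\<bar> *\<^sub>R (\<integral>x. indicator {..s} (0 + (-1) * x) * ((s - (0 + (-1) * x)) * ((0 + (-1) * x)\<^sup>2 - 1) * phi (0 + (-1) * x)) \<partial>lborel)"
    by (rule lborel_integral_real_affine) simp
  also have "(\<lambda>x. indicator {..s} (0 + (-1) * x) * ((s - (0 + (-1) * x)) * ((0 + (-1) * x)\<^sup>2 - 1) * phi (0 + (-1) * x)))
     = (\<lambda>x. indicator {-s..} x * ((x - (-s)) * (x\<^sup>2 - 1) * phi x))"
    by (auto simp: phi_neg split: split_indicator)
  finally show ?thesis using P_val[of "-s"] by (simp add: phi_neg)
qed



lemma conv3:
  fixes f :: "real \<Rightarrow> real"
  assumes "convex_on UNIV f" "u < v" "v < w"
  shows "(w - u) * f v \<le> (w - v) * f u + (v - u) * f w"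
proof -
  define t where "t = (v - u) / (w - u)"
  have t0: "0 \<le> t" "t \<le> 1" using assms by (auto simp: t_def field_simps)
  have tw: "t * (w - u) = v - u" using assms by (simp add: t_def)
  have "(1 - t) *\<^sub>R u + t *\<^sub>R w = u + t * (w - u)" by (simp add: algebra_simps)
  then have v: "(1 - t) *\<^sub>R u + t *\<^sub>R w = v" using tw by simp
  have "f v \<le> (1 - t) * f u + t * f w"
    using convex_onD[OF assms(1) t0, of u w] v by simp
  then have "(w - u) * f v \<le> (w - u) * ((1 - t) * f u + t * f w)"
    using assms by (intro mult_left_mono) auto
  also have "\<dots> = (w - u) * f u - (t * (w - u)) * f u + (t * (w - u)) * f w"
    by (simp add: algebra_simps)
  also have "\<dots> = (w - v) * f u + (v - u) * f w"
    unfolding tw by (simp add: algebra_simps)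
  finally show ?thesis .
qed

lemma conv3g:
  fixes f :: "real \<Rightarrow> real"
  assumes "convex_on UNIV f" "u < v" "v < w"
  shows "(w - u) * (f v - (c + a * v)) \<le> (w - v) * (f u - (c + a * u)) + (v - u) * (f w - (c + a * w))"
proof -
  have "(w - u) * (c + a * v) = (w - v) * (c + a * u) + (v - u) * (c + a * w)"
    by (simp add: algebra_simps)
  then show ?thesis using conv3[OF assms] by (simp add: algebra_simps)
qed

lemma abs_prod_le: "\<bar>a * b\<bar> \<le> a\<^sup>2 + (b::real)\<^sup>2"
proof -
  have "0 \<le> (\<bar>a\<bar> - \<bar>b\<bar>)\<^sup>2" by simp
  then have "2 * (\<bar>a\<bar> * \<bar>b\<bar>) \<le> a\<^sup>2 + b\<^sup>2" by (simp add: power2_eq_square algebra_simps)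
  moreover have "0 \<le> \<bar>a\<bar> * \<bar>b\<bar>" by simp
  ultimately have "\<bar>a\<bar> * \<bar>b\<bar> \<le> a\<^sup>2 + b\<^sup>2" by linarith
  then show ?thesis by (simp add: abs_mult)
qed

lemma int_fq:
  assumes [measurable]: "f \<in> borel_measurable borel" "q \<in> borel_measurable borel"
  and i1: "integrable lborel (\<lambda>x. phi x * (f x)\<^sup>2)" and i2: "integrable lborel (\<lambda>x. phi x * (q x)\<^sup>2)"
  shows "integrable lborel (\<lambda>x. f x * q x * phi x)"
proof (rule Bochner_Integration.integrable_bound[OF Bochner_Integration.integrable_add[OF i1 i2]])
  show "(\<lambda>x. f x * q x * phi x) \<in> borel_measurable lborel" by measurable
  show "AE x in lborel. norm (f x * q x * phi x) \<le> norm (phi x * (f x)\<^sup>2 + phi x * (q x)\<^sup>2)"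
  proof (rule AE_I2)
    fix x
    have p: "0 \<le> phi x" by simp
    have "norm (f x * q x * phi x) = \<bar>f x * q x\<bar> * phi x" by (simp add: abs_mult)
    also have "\<dots> \<le> ((f x)\<^sup>2 + (q x)\<^sup>2) * phi x" by (rule mult_right_mono[OF abs_prod_le p])
    also have "\<dots> \<le> norm (phi x * (f x)\<^sup>2 + phi x * (q x)\<^sup>2)" by (simp add: algebra_simps)
    finally show "norm (f x * q x * phi x) \<le> norm (phi x * (f x)\<^sup>2 + phi x * (q x)\<^sup>2)" .
  qed
qed

lemma int_poly4: "integrable lborel (\<lambda>x. (c0 + c1*x + c2*x\<^sup>2 + c3*x^3 + c4*x^4) * phi x)"
proof -
  have i: "\<And>k c. integrable lborel (\<lambda>x. c * (phi x * x^k))"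
    by (intro integrable_mult_right integrable_std_normal_moment)
  have "integrable lborel (\<lambda>x. c0 * (phi x * x^0) + c1 * (phi x * x^1) + c2 * (phi x * x^2) + c3 * (phi x * x^3) + c4 * (phi x * x^4))"
    by (intro Bochner_Integration.integrable_add i)
  then show ?thesis by (simp add: algebra_simps)
qed

lemma HB0: "has_bochner_integral lborel (\<lambda>x. phi x) 1"
  using std_normal_moment_even[of 0] by simp
lemma HB1: "has_bochner_integral lborel (\<lambda>x. phi x * x) 0"
  using std_normal_moment_odd[of 0] by simp
lemma HB2: "has_bochner_integral lborel (\<lambda>x. phi x * x\<^sup>2) 1"
  using std_normal_moment_even[of 1] by simp
lemma HB3: "has_bochner_integral lborel (\<lambda>x. phi x * x^3) 0"
  using std_normal_moment_odd[of 1] by (simp add: numeral_3_eq_3)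

lemma E0: "has_bochner_integral lborel (\<lambda>x. (x\<^sup>2 - 1) * phi x) 0"
  using has_bochner_integral_diff[OF HB2 HB0] by (simp add: algebra_simps)
lemma E1: "has_bochner_integral lborel (\<lambda>x. x * (x\<^sup>2 - 1) * phi x) 0"
proof -
  have "(\<lambda>x. x * (x\<^sup>2 - 1) * phi x) = (\<lambda>x. phi x * x^3 - phi x * x)"
    by (auto simp: algebra_simps power2_eq_square power3_eq_cube)
  then show ?thesis using has_bochner_integral_diff[OF HB3 HB1] by simp
qed

lemma PB: "has_bochner_integral lborel (\<lambda>x. indicator {s..} x * ((x - s) * (x\<^sup>2 - 1) * phi x)) (phi s)"
  using P_int P_val by (simp add: has_bochner_integral_iff)
lemma NB: "has_bochner_integral lborel (\<lambda>x. indicator {..s} x * ((s - x) * (x\<^sup>2 - 1) * phi x)) (phi s)"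
  using N_int N_val by (simp add: has_bochner_integral_iff)



lemma hbm: "has_bochner_integral M f x \<Longrightarrow> has_bochner_integral M (\<lambda>y. (c::real) * f y) (c * x)"
  by (rule has_bochner_integral_mult_right)

lemma hbi: "has_bochner_integral M f x \<Longrightarrow> integrable M f"
  by (simp add: has_bochner_integral_iff)

lemma sgn_mult: fixes A B d :: real
  assumes "0 \<le> d \<Longrightarrow> A \<le> B" "d \<le> 0 \<Longrightarrow> B \<le> A" shows "A * d \<le> B * d"
proof (cases "0 \<le> d")
  case True then show ?thesis using assms(1) by (intro mult_right_mono) auto
next
  case False then show ?thesis using assms(2) by (intro mult_right_mono_neg) auto
qed

lemma dsign: fixes x :: real
  shows "0 \<le> (x\<^sup>2 - 1) * phi x \<Longrightarrow> 1 \<le> \<bar>x\<bar>" and "(x\<^sup>2 - 1) * phi x \<le> 0 \<Longrightarrow> \<bar>x\<bar> \<le> 1"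
    and "1 \<le> \<bar>x\<bar> \<Longrightarrow> 0 \<le> (x\<^sup>2 - 1) * phi x"
proof -
  have p: "0 < phi x" by (rule normal_density_pos) simp
  have e: "1 \<le> \<bar>x\<bar> \<longleftrightarrow> 1 \<le> x\<^sup>2" using abs_le_square_iff[of 1 x] by simp
  have e2: "\<bar>x\<bar> \<le> 1 \<longleftrightarrow> x\<^sup>2 \<le> 1" using abs_le_square_iff[of x 1] by simp
  show "0 \<le> (x\<^sup>2 - 1) * phi x \<Longrightarrow> 1 \<le> \<bar>x\<bar>" using p e by (simp add: zero_le_mult_iff)
  show "(x\<^sup>2 - 1) * phi x \<le> 0 \<Longrightarrow> \<bar>x\<bar> \<le> 1" using p e2 by (simp add: mult_le_0_iff)
  show "1 \<le> \<bar>x\<bar> \<Longrightarrow> 0 \<le> (x\<^sup>2 - 1) * phi x" using p e by simp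
qed

theorem lemma2:
  fixes f :: "real \<Rightarrow> real"
  assumes "L2_gauss f"
    and "convex_on UNIV f"
    and "f \<noteq> (\<lambda>x. 0)"
  shows "\<exists>i\<le>2. (\<integral>x. f x * hermite i x \<partial>std_gauss) \<noteq> 0"
proof (rule ccontr)
  assume "\<not> ?thesis"
  then have H: "\<And>i. i \<le> 2 \<Longrightarrow> (\<integral>x. f x * hermite i x \<partial>std_gauss) = 0" by auto
  have fm[measurable]: "f \<in> borel_measurable borel" using assms(1) by (simp add: L2_gauss_def)
  have cv: "convex_on UNIV f" by fact
  have conv: "(\<integral>x. h x \<partial>std_gauss) = (\<integral>x. phi x * h x \<partial>lborel)" if [measurable]: "h \<in> borel_measurable borel" for h
    unfolding std_gauss_def by (subst integral_density) auto
  have sq: "integrable lborel (\<lambda>x. phi x * (f x)\<^sup>2)"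
  proof -
    have "integrable std_gauss (\<lambda>x. (f x)\<^sup>2)" using assms(1) by (simp add: L2_gauss_def)
    then show ?thesis unfolding std_gauss_def by (subst (asm) integrable_density) auto
  qed
  have Z: "has_bochner_integral lborel (\<lambda>x. f x * q x * phi x) 0"
    if "i \<le> 2" "\<And>x. hermite i x = q x" "q \<in> borel_measurable borel" "integrable lborel (\<lambda>x. phi x * (q x)\<^sup>2)" for i q
  proof -
    have mq: "(\<lambda>x. f x * q x) \<in> borel_measurable borel" using that(3) by (intro borel_measurable_times fm)
    have "(\<integral>x. f x * q x \<partial>std_gauss) = 0" using H[OF that(1)] that(2) by simp
    then have "(\<integral>x. phi x * (f x * q x) \<partial>lborel) = 0" using conv[OF mq] by simp
    then have "(\<integral>x. f x * q x * phi x \<partial>lborel) = 0" by (simp add: mult_ac)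
    moreover have "integrable lborel (\<lambda>x. f x * q x * phi x)" by (rule int_fq[OF fm that(3) sq that(4)])
    ultimately show ?thesis by (simp add: has_bochner_integral_iff)
  qed
  have ip: "\<And>c0 c1 c2 c3 c4. integrable lborel (\<lambda>x. (c0 + c1*x + c2*x\<^sup>2 + c3*x^3 + c4*x^4) * phi x)"
    by (rule int_poly4)
  have Z0: "has_bochner_integral lborel (\<lambda>x. f x * phi x) 0"
  proof -
    have "integrable lborel (\<lambda>x. phi x * 1\<^sup>2)" using ip[of 1 0 0 0 0] by (simp add: mult_ac)
    from Z[of 0 "\<lambda>x. 1", OF _ _ _ this] show ?thesis by (simp add: herm0)
  qed
  have Z1: "has_bochner_integral lborel (\<lambda>x. f x * x * phi x) 0"
  proof -
    have "integrable lborel (\<lambda>x. phi x * x\<^sup>2)" using ip[of 0 0 1 0 0] by (simp add: mult_ac)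
    from Z[of 1 "\<lambda>x. x", OF _ herm1 _ this] show ?thesis by simp
  qed
  have Z2: "has_bochner_integral lborel (\<lambda>x. f x * (x\<^sup>2 - 1) * phi x) 0"
  proof -
    have "integrable lborel (\<lambda>x. (1 + 0*x + (-2)*x\<^sup>2 + 0*x^3 + 1*x^4) * phi x)" by (rule ip)
    also have "(\<lambda>x. (1 + 0*x + (-2)*x\<^sup>2 + 0*x^3 + 1*x^4) * phi x) = (\<lambda>x. phi x * (x\<^sup>2 - 1)\<^sup>2)"
      by (auto simp: algebra_simps power2_eq_square power4_eq_xxxx)
    finally have "integrable lborel (\<lambda>x. phi x * (x\<^sup>2 - 1)\<^sup>2)" .
    from Z[of 2 "\<lambda>x. x\<^sup>2 - 1", OF _ _ _ this] show ?thesis by (simp add: herm2)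
  qed
  define a where "a = f 1 - f 0"
  define b where "b = f (-1) - f 0"
  have F1: "f 0 + a * x \<le> f x" if "1 \<le> x" for x
  proof (cases "x = 1")
    case False
    then have c: "(x - 0) * f 1 \<le> (x - 1) * f 0 + (1 - 0) * f x" using conv3[OF cv, of 0 1 x] that by simp
    then show ?thesis unfolding a_def by (simp add: algebra_simps)
  qed (simp add: a_def)
  have F2: "f x \<le> f 0 + a * x" if "0 \<le> x" "x \<le> 1" for x
  proof (cases "x = 0 \<or> x = 1")
    case False
    then have c: "(1 - 0) * f x \<le> (1 - x) * f 0 + (x - 0) * f 1" using conv3[OF cv, of 0 x 1] that by simp
    then show ?thesis unfolding a_def by (simp add: algebra_simps)
  qed (auto simp: a_def)
  have F3: "f 0 - b * x \<le> f x" if "x \<le> -1" for x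
  proof (cases "x = -1")
    case False
    then have c: "(0 - x) * f (-1) \<le> (0 - (-1)) * f x + (-1 - x) * f 0" using conv3[OF cv, of x "-1" 0] that by simp
    then show ?thesis unfolding b_def by (simp add: algebra_simps)
  qed (simp add: b_def)
  have F4: "f x \<le> f 0 - b * x" if "-1 \<le> x" "x \<le> 0" for x
  proof (cases "x = 0 \<or> x = -1")
    case False
    then have c: "(0 - (-1)) * f x \<le> (0 - x) * f (-1) + (x - (-1)) * f 0" using conv3[OF cv, of "-1" x 0] that by simp
    then show ?thesis unfolding b_def by (simp add: algebra_simps)
  qed (auto simp: b_def)
  define K where "K x = f 0 * ((x\<^sup>2 - 1) * phi x) + a * (indicator {0..} x * ((x - 0) * (x\<^sup>2 - 1) * phi x))
     + b * (indicator {..0} x * ((0 - x) * (x\<^sup>2 - 1) * phi x))" for x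
  have HK: "has_bochner_integral lborel K (f 0 * 0 + a * phi 0 + b * phi 0)"
    unfolding K_def
    by (intro has_bochner_integral_add hbm E0 PB NB)
  have Kle: "K x \<le> f x * (x\<^sup>2 - 1) * phi x" for x
  proof -
    define K' where "K' = (if 0 \<le> x then f 0 + a * x else f 0 - b * x)"
    have "K x = K' * ((x\<^sup>2 - 1) * phi x)"
      unfolding K_def K'_def by (auto split: split_indicator simp: algebra_simps)
    also have "\<dots> \<le> f x * ((x\<^sup>2 - 1) * phi x)"
    proof (rule sgn_mult)
      assume "0 \<le> (x\<^sup>2 - 1) * phi x"
      then have "1 \<le> \<bar>x\<bar>" by (rule dsign)
      then show "K' \<le> f x" unfolding K'_def using F1[of x] F3[of x] by (auto split: if_splits)
    next
      assume "(x\<^sup>2 - 1) * phi x \<le> 0"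
      then have "\<bar>x\<bar> \<le> 1" by (rule dsign)
      then show "f x \<le> K'" unfolding K'_def using F2[of x] F4[of x] by (auto split: if_splits)
    qed
    finally show ?thesis by (simp add: mult_ac)
  qed
  have "(a + b) * phi 0 \<le> 0"
  proof -
    have "integral\<^sup>L lborel K \<le> (\<integral>x. f x * (x\<^sup>2 - 1) * phi x \<partial>lborel)"
      using integral_mono[OF hbi[OF HK] hbi[OF Z2] Kle] .
    then show ?thesis using has_bochner_integral_integral_eq[OF HK] has_bochner_integral_integral_eq[OF Z2]
      by (simp add: algebra_simps)
  qed
  moreover have "0 < phi 0" by (rule normal_density_pos) simp
  ultimately have "a + b \<le> 0" by (simp add: mult_le_0_iff)
  moreover have "(1 - (-1)) * f 0 \<le> (1 - 0) * f (-1) + (0 - (-1)) * f 1"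
    using conv3[OF cv, of "-1" 0 1] by simp
  ultimately have ba: "b = - a" unfolding a_def b_def by simp
  have F5: "f 0 + a * x \<le> f x" if "0 \<le> x" "x \<le> 1" for x
  proof (cases "x = 0")
    case False
    then have c: "(x - (-1)) * f 0 \<le> (x - 0) * f (-1) + (0 - (-1)) * f x" using conv3[OF cv, of "-1" 0 x] that by simp
    have e: "f (-1) = 2 * f 0 - f 1" using ba unfolding a_def b_def by simp
    show ?thesis using c unfolding a_def by (simp add: algebra_simps e)
  qed (simp add: a_def)
  have F6: "f 0 + a * x \<le> f x" if "-1 \<le> x" "x \<le> 0" for x
  proof (cases "x = 0")
    case False
    then have c: "(1 - x) * f 0 \<le> (1 - 0) * f x + (0 - x) * f 1" using conv3[OF cv, of x 0 1] that by simp
    then show ?thesis unfolding a_def by (simp add: algebra_simps)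
  qed (simp add: a_def)
  define g where "g x = f x - (f 0 + a * x)" for x
  have gpos: "0 \<le> g x" for x
  proof -
    consider "1 \<le> x" | "x \<le> -1" | "0 \<le> x" "x \<le> 1" | "-1 \<le> x" "x \<le> 0" by linarith
    then have "f 0 + a * x \<le> f x"
    proof cases
      case 1 then show ?thesis by (rule F1)
    next
      case 2 then show ?thesis using F3[of x] ba by simp
    next
      case 3 then show ?thesis by (rule F5)
    next
      case 4 then show ?thesis by (rule F6)
    qed
    then show ?thesis unfolding g_def by simp
  qed
  have gz: "g x = 0" if "\<bar>x\<bar> \<le> 1" for x
  proof (cases "0 \<le> x")
    case True
    then have "x \<le> 1" using that by simp
    then show ?thesis using F2[of x] F5[of x] True unfolding g_def by simp
  next
    case False
    then have "-1 \<le> x" "x \<le> 0" using that by auto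
    then show ?thesis using F4[of x] F6[of x] ba unfolding g_def by simp
  qed
  have G3: "(w - u) * g v \<le> (w - v) * g u + (v - u) * g w" if "u < v" "v < w" for u v w
    unfolding g_def by (rule conv3g[OF cv that])
  have HG: "has_bochner_integral lborel (\<lambda>x. g x * (x\<^sup>2 - 1) * phi x) 0"
  proof -
    have "has_bochner_integral lborel (\<lambda>x. f x * (x\<^sup>2 - 1) * phi x - f 0 * ((x\<^sup>2 - 1) * phi x) - a * (x * (x\<^sup>2 - 1) * phi x)) (0 - f 0 * 0 - a * 0)"
      by (intro has_bochner_integral_diff Z2 hbm E0 E1)
    then show ?thesis unfolding g_def by (simp add: algebra_simps)
  qed
  have gpos2: "0 \<le> g x * (x\<^sup>2 - 1) * phi x" for x
  proof (cases "\<bar>x\<bar> \<le> 1")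
    case True then have "g x = 0" by (rule gz)
    then show ?thesis by simp
  next
    case False
    then have "1 \<le> \<bar>x\<bar>" by simp
    then have "0 \<le> (x\<^sup>2 - 1) * phi x" by (rule dsign(3))
    then have "0 \<le> g x * ((x\<^sup>2 - 1) * phi x)" using gpos[of x] by (rule mult_nonneg_nonneg[rotated])
    then show ?thesis by (simp only: mult.assoc)
  qed
  have gall: "g x0 = 0" for x0
  proof (rule ccontr)
    assume "g x0 \<noteq> 0"
    with gpos[of x0] have gp: "0 < g x0" by simp
    have ax: "1 < \<bar>x0\<bar>"
    proof (rule ccontr)
      assume "\<not> 1 < \<bar>x0\<bar>"
      then have "g x0 = 0" using gz by simp
      with gp show False by simp
    qed
    have p0: "0 < phi x0" by (rule normal_density_pos) simp
    show False
    proof (cases "1 < x0")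
      case True
      define m where "m = g x0 / (x0 - 1)"
      have mp: "0 < m" using gp True by (simp add: m_def)
      have HM: "has_bochner_integral lborel (\<lambda>x. m * (indicator {x0..} x * ((x - x0) * (x\<^sup>2 - 1) * phi x))) (m * phi x0)"
        by (intro hbm PB)
      have le: "m * (indicator {x0..} x * ((x - x0) * (x\<^sup>2 - 1) * phi x)) \<le> g x * (x\<^sup>2 - 1) * phi x" for x
      proof (cases "x0 \<le> x")
        case True
        have d: "0 \<le> (x\<^sup>2 - 1) * phi x" using \<open>1 < x0\<close> True by (intro dsign(3)) simp
        have "m * (x - x0) \<le> g x"
        proof (cases "x = x0")
          case False
          with True have "x0 < x" by simp
          from G3[OF \<open>1 < x0\<close> this] have "(x - 1) * g x0 \<le> (x0 - 1) * g x"
            using gz[of 1] by simp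
          then have "g x0 * (x - 1) / (x0 - 1) \<le> g x" using \<open>1 < x0\<close> by (simp add: pos_divide_le_eq mult_ac)
          moreover have "m * (x - x0) \<le> m * (x - 1)" using mp \<open>1 < x0\<close> by (intro mult_left_mono) auto
          ultimately show ?thesis by (simp add: m_def)
        qed (simp add: gpos)
        then have "m * (x - x0) * ((x\<^sup>2 - 1) * phi x) \<le> g x * ((x\<^sup>2 - 1) * phi x)"
          using d by (rule mult_right_mono)
        then show ?thesis using True by (simp add: mult_ac)
      next
        case False
        then show ?thesis using gpos2[of x] by simp
      qed
      have "m * phi x0 \<le> 0"
        using integral_mono[OF hbi[OF HM] hbi[OF HG] le]
          has_bochner_integral_integral_eq[OF HM] has_bochner_integral_integral_eq[OF HG] by linarith
      with mp p0 show False by (simp add: mult_le_0_iff)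
    next
      case False
      with ax have x0n: "x0 < -1" by simp
      define m where "m = g x0 / (-1 - x0)"
      have mp: "0 < m" using gp x0n by (simp add: m_def)
      have HM: "has_bochner_integral lborel (\<lambda>x. m * (indicator {..x0} x * ((x0 - x) * (x\<^sup>2 - 1) * phi x))) (m * phi x0)"
        by (intro hbm NB)
      have le: "m * (indicator {..x0} x * ((x0 - x) * (x\<^sup>2 - 1) * phi x)) \<le> g x * (x\<^sup>2 - 1) * phi x" for x
      proof (cases "x \<le> x0")
        case True
        have d: "0 \<le> (x\<^sup>2 - 1) * phi x" using x0n True by (intro dsign(3)) simp
        have "m * (x0 - x) \<le> g x"
        proof (cases "x = x0")
          case False
          with True have "x < x0" by simp
          from G3[OF this x0n] have "(-1 - x) * g x0 \<le> (-1 - x0) * g x"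
            using gz[of "-1"] by simp
          then have "g x0 * (-1 - x) / (-1 - x0) \<le> g x" using x0n by (simp add: pos_divide_le_eq mult_ac)
          moreover have "m * (x0 - x) \<le> m * (-1 - x)" using mp x0n by (intro mult_left_mono) auto
          ultimately show ?thesis by (simp add: m_def)
        qed (simp add: gpos)
        then have "m * (x0 - x) * ((x\<^sup>2 - 1) * phi x) \<le> g x * ((x\<^sup>2 - 1) * phi x)"
          using d by (rule mult_right_mono)
        then show ?thesis using True by (simp add: mult_ac)
      next
        case False
        then show ?thesis using gpos2[of x] by simp
      qed
      have "m * phi x0 \<le> 0"
        using integral_mono[OF hbi[OF HM] hbi[OF HG] le]
          has_bochner_integral_integral_eq[OF HM] has_bochner_integral_integral_eq[OF HG] by linarith
      with mp p0 show False by (simp add: mult_le_0_iff)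
    qed
  qed
  have fl: "f x = f 0 + a * x" for x
  proof -
    have "f x - (f 0 + a * x) = 0" using gall[of x] unfolding g_def .
    then show ?thesis by linarith
  qed
  have "has_bochner_integral lborel (\<lambda>x. f 0 * phi x + a * (phi x * x)) (f 0 * 1 + a * 0)"
    by (intro has_bochner_integral_add hbm HB0 HB1)
  moreover have "(\<lambda>x. f 0 * phi x + a * (phi x * x)) = (\<lambda>x. f x * phi x)"
  proof
    fix x show "f 0 * phi x + a * (phi x * x) = f x * phi x" using fl[of x] by (simp add: algebra_simps)
  qed
  ultimately have "has_bochner_integral lborel (\<lambda>x. f x * phi x) (f 0 * 1 + a * 0)" by simp
  then have "integral\<^sup>L lborel (\<lambda>x. f x * phi x) = f 0 * 1 + a * 0" by (rule has_bochner_integral_integral_eq)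
  then have "f 0 = 0" using has_bochner_integral_integral_eq[OF Z0] by simp
  have "has_bochner_integral lborel (\<lambda>x. f 0 * (phi x * x) + a * (phi x * x\<^sup>2)) (f 0 * 0 + a * 1)"
    by (intro has_bochner_integral_add hbm HB1 HB2)
  moreover have "(\<lambda>x. f 0 * (phi x * x) + a * (phi x * x\<^sup>2)) = (\<lambda>x. f x * x * phi x)"
  proof
    fix x show "f 0 * (phi x * x) + a * (phi x * x\<^sup>2) = f x * x * phi x" using fl[of x] by (simp add: algebra_simps power2_eq_square)
  qed
  ultimately have "has_bochner_integral lborel (\<lambda>x. f x * x * phi x) (f 0 * 0 + a * 1)" by simp
  then have "integral\<^sup>L lborel (\<lambda>x. f x * x * phi x) = f 0 * 0 + a * 1" by (rule has_bochner_integral_integral_eq)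
  then have "a = 0" using has_bochner_integral_integral_eq[OF Z1] by simp
  have "f = (\<lambda>x. 0)"
  proof
    fix x show "f x = 0" using fl[of x] \<open>f 0 = 0\<close> \<open>a = 0\<close> by simp
  qed
  with assms(3) show False by simp
qed


end
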